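(* Let $k\in\mathbb N$, $1\le q<\infty$, $\alpha,\beta\in\mathbb R$, and $f\in\mathbb M_+^k\cap\mathbb W_q^{\alpha,\beta}$. Then, for every $\delta>0$, \[ \overleftarrow\Omega_\varphi^k(f,\delta)_{w_{\alpha,\beta},q}\le c\|w_{\alpha,\beta}f\|_{L_q[1-2k^2\delta^2,1]}, \] with $c$ independent of $f$ and $\delta$.
   Context: $w_{\alpha,\beta}(x)=(1+x)^\alpha(1-x)^\beta$; $\|g\|_{L_q(S)}$ is the $L_q$ norm over $S$, $\|\cdot\|_q$ the $L_q[-1,1]$ norm; $\mathbb W_q^{\alpha,\beta}=\{f:\|w_{\alpha,\beta}f\|_q<\infty\}$. $\Delta_h^k(f,x)=\sum_{i=0}^k\binom ki(-1)^{k-i}f(x-kh/2+ih)$ if $x\pm kh/2\in[-1,1]$, else $0$, and $\overleftarrow\Delta_h^k(f,x)=\Delta_h^k(f,x-kh/2)$. For a weight $w$, $\overleftarrow\Omega_\varphi^k(f,\delta)_{w,q}=\sup_{0<h\le2k^2\delta^2}\|w\overleftarrow\Delta_h^k(f,\cdot)\|_{L_q[1-2k^2\delta^2,1]}$. $\mathbb M^k$: functions on $(-1,1)$ with all $k$th divided differences at distinct points nonnegative; $\mathbb M_+^k=\{f\in\mathbb M^k:f=0\text{ on }(-1,0]\}$. *)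

theory Defs
  imports "HOL-Analysis.Analysis"
begin

definition jacobi_w :: "real \<Rightarrow> real \<Rightarrow> real \<Rightarrow> real" where
  "jacobi_w \<alpha> \<beta> x = (1 + x) powr \<alpha> * (1 - x) powr \<beta>"

text \<open>L_q quasi-norm of g over S (as an extended nonnegative real; infinite if the
  integral diverges). Functions live on [-1,1], so S is intersected with [-1,1].\<close>
definition Lq_norm :: "real set \<Rightarrow> real \<Rightarrow> (real \<Rightarrow> real) \<Rightarrow> ennreal" where
  "Lq_norm S q g =
     (let I = (\<integral>\<^sup>+ x. indicator (S \<inter> {-1..1}) x * ennreal (\<bar>g x\<bar> powr q) \<partial>lborel)
      in if I = \<infinity> then \<infinity> else ennreal ((enn2real I) powr (1 / q)))"

definition W_space :: "real \<Rightarrow> real \<Rightarrow> real \<Rightarrow> (real \<Rightarrow> real) set" where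
  "W_space q \<alpha> \<beta> = {f. Lq_norm {-1..1} q (\<lambda>x. jacobi_w \<alpha> \<beta> x * f x) < \<infinity>}"

text \<open>Symmetric k-th difference with the convention that it vanishes unless x \<plusminus> kh/2 \<in> [-1,1].\<close>
definition sym_diff :: "nat \<Rightarrow> real \<Rightarrow> (real \<Rightarrow> real) \<Rightarrow> real \<Rightarrow> real" where
  "sym_diff k h f x =
     (if -1 \<le> x - real k * h / 2 \<and> x + real k * h / 2 \<le> 1
      then (\<Sum>i=0..k. real (k choose i) * (-1) ^ (k - i) * f (x - real k * h / 2 + real i * h))
      else 0)"

definition back_diff :: "nat \<Rightarrow> real \<Rightarrow> (real \<Rightarrow> real) \<Rightarrow> real \<Rightarrow> real" where
  "back_diff k h f x = sym_diff k h f (x - real k * h / 2)"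

definition back_Omega ::
  "nat \<Rightarrow> (real \<Rightarrow> real) \<Rightarrow> real \<Rightarrow> (real \<Rightarrow> real) \<Rightarrow> real \<Rightarrow> ennreal" where
  "back_Omega k f \<delta> w q =
     (SUP h\<in>{0<..2 * (real k)\<^sup>2 * \<delta>\<^sup>2}.
        Lq_norm {1 - 2 * (real k)\<^sup>2 * \<delta>\<^sup>2..1} q (\<lambda>x. w x * back_diff k h f x))"

definition divided_diff :: "nat \<Rightarrow> (nat \<Rightarrow> real) \<Rightarrow> (real \<Rightarrow> real) \<Rightarrow> real" where
  "divided_diff k x f = (\<Sum>i=0..k. f (x i) / (\<Prod>j\<in>{0..k} - {i}. (x i - x j)))"

definition k_monotone :: "nat \<Rightarrow> (real \<Rightarrow> real) set" where
  "k_monotone k = {f. \<forall>x. inj_on x {0..k} \<longrightarrow> (\<forall>i\<in>{0..k}. x i \<in> {-1<..<1})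
                         \<longrightarrow> divided_diff k x f \<ge> 0}"

definition k_monotone_plus :: "nat \<Rightarrow> (real \<Rightarrow> real) set" where
  "k_monotone_plus k = {f \<in> k_monotone k. \<forall>x\<in>{-1<..0}. f x = 0}"

end

theory Submission
  imports Defs
begin

lemma nn_cmult_le:
  assumes c: "c > 0"
  shows "(\<integral>\<^sup>+ x. ennreal c * f x \<partial>M) \<le> ennreal c * (\<integral>\<^sup>+ x. f x \<partial>M)"
  unfolding nn_integral_def
proof (rule SUP_least)
  fix g assume g: "g \<in> {g. simple_function M g \<and> g \<le> (\<lambda>x. ennreal c * f x)}"
  define g' where "g' x = ennreal (1/c) * g x" for x
  have inv: "ennreal c * ennreal (1/c) = 1" "ennreal (1/c) * ennreal c = 1"
    using c by (simp_all add: ennreal_mult[symmetric])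
  have sg': "simple_function M g'" using g unfolding g'_def by auto
  have "g' \<le> f"
  proof (rule le_funI)
    fix x
    have "g x \<le> ennreal c * f x" using g by (auto simp: le_fun_def)
    then have "g' x \<le> ennreal (1/c) * (ennreal c * f x)" unfolding g'_def by (rule mult_left_mono) simp
    also have "\<dots> = f x" by (simp add: mult.assoc[symmetric] inv)
    finally show "g' x \<le> f x" .
  qed
  have geq: "g = (\<lambda>x. ennreal c * g' x)" unfolding g'_def by (simp add: mult.assoc[symmetric] inv)
  have "integral\<^sup>S M g = ennreal c * integral\<^sup>S M g'"
    by (subst geq) (simp add: sg')
  also have "\<dots> \<le> ennreal c * (SUP g\<in>{g. simple_function M g \<and> g \<le> f}. integral\<^sup>S M g)"
    using sg' \<open>g' \<le> f\<close> by (intro mult_left_mono SUP_upper) auto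
  finally show "integral\<^sup>S M g \<le> ennreal c * (SUP g\<in>{g. simple_function M g \<and> g \<le> f}. integral\<^sup>S M g)" .
qed

lemma tpt: "-1/(real i+2) \<in> {-1<..<1}" "-1/(real i+2) < 0"
  by (auto simp: field_simps)

lemma negeq: "-1/(real i+2) = -1/(real j+2) \<Longrightarrow> i = j"
  by (simp add: divide_simps)

lemma Lq_mono:
  assumes c: "c > 0" and q: "q \<ge> 1"
    and ae: "AE x in lborel. x \<in> S \<inter> {-1..1} \<longrightarrow> \<bar>g x\<bar> \<le> c * \<bar>g' x\<bar>"
  shows "Lq_norm S q g \<le> ennreal c * Lq_norm S q g'"
proof -
  define I where "I = (\<integral>\<^sup>+ x. indicator (S \<inter> {-1..1}) x * ennreal (\<bar>g x\<bar> powr q) \<partial>lborel)"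
  define I' where "I' = (\<integral>\<^sup>+ x. indicator (S \<inter> {-1..1}) x * ennreal (\<bar>g' x\<bar> powr q) \<partial>lborel)"
  have "I \<le> (\<integral>\<^sup>+ x. ennreal (c powr q) * (indicator (S \<inter> {-1..1}) x * ennreal (\<bar>g' x\<bar> powr q)) \<partial>lborel)"
    unfolding I_def
  proof (rule nn_integral_mono_AE)
    show "AE x in lborel. indicator (S \<inter> {-1..1}) x * ennreal (\<bar>g x\<bar> powr q)
        \<le> ennreal (c powr q) * (indicator (S \<inter> {-1..1}) x * ennreal (\<bar>g' x\<bar> powr q))"
      using ae
    proof eventually_elim
      case (elim x)
      show ?case
      proof (cases "x \<in> S \<inter> {-1..1}")
        case True
        then have "\<bar>g x\<bar> \<le> c * \<bar>g' x\<bar>" using elim by blast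
        then have "\<bar>g x\<bar> powr q \<le> (c * \<bar>g' x\<bar>) powr q"
          using q by (intro powr_mono2) auto
        also have "\<dots> = c powr q * \<bar>g' x\<bar> powr q" using c by (simp add: powr_mult)
        finally show ?thesis using True c
          by (simp add: ennreal_mult[symmetric])
      qed simp
    qed
  qed
  also have "\<dots> \<le> ennreal (c powr q) * I'" unfolding I'_def
    by (rule nn_cmult_le) (use c in simp)
  finally have II: "I \<le> ennreal (c powr q) * I'" .
  show ?thesis
  proof (cases "I' = \<infinity>")
    case True
    then have "Lq_norm S q g' = \<infinity>" unfolding Lq_norm_def I'_def[symmetric] by simp
    then show ?thesis using c by (simp add: ennreal_mult_top)
  next
    case False
    have "I' < top" using False by (simp add: less_top[symmetric])
    then have "ennreal (c powr q) * I' < \<infinity>"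
      by (simp add: ennreal_mult_less_top)
    with II have "I < \<infinity>" by (rule le_less_trans)
    then have If: "I \<noteq> \<infinity>" by simp
    have L1: "Lq_norm S q g = ennreal (enn2real I powr (1/q))"
      unfolding Lq_norm_def I_def[symmetric] using If by simp
    have L2: "Lq_norm S q g' = ennreal (enn2real I' powr (1/q))"
      unfolding Lq_norm_def I'_def[symmetric] using False by simp
    have "enn2real I \<le> enn2real (ennreal (c powr q) * I')"
      by (rule enn2real_mono[OF II]) (use \<open>ennreal (c powr q) * I' < \<infinity>\<close> in simp)
    also have "\<dots> = c powr q * enn2real I'" by (simp add: enn2real_mult)
    finally have e: "enn2real I \<le> c powr q * enn2real I'" .
    have "enn2real I powr (1/q) \<le> (c powr q * enn2real I') powr (1/q)"
      using e q by (intro powr_mono2) auto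
    also have "\<dots> = c * enn2real I' powr (1/q)"
      using c q by (simp add: powr_mult powr_powr)
    finally have "enn2real I powr (1/q) \<le> c * enn2real I' powr (1/q)" .
    then show ?thesis unfolding L1 L2 using c
      by (simp add: ennreal_mult[symmetric] ennreal_leI)
  qed
qed

lemma kmp_nonneg:
  assumes f: "f \<in> k_monotone_plus k" and y: "-1 < y" "y < 1"
  shows "f y \<ge> 0"
proof (cases "y \<le> 0")
  case True
  then show ?thesis using f y unfolding k_monotone_plus_def by auto
next
  case False
  define x where "x i = (if i = k then y else -1/(real i+2))" for i
  have neg: "-1 < -1/(real i+2) \<and> -1/(real i+2) < 0 \<and> 0 < 1/(real i+2) \<and> 1/(real i+2) < 1" for i :: nat
    by (auto simp: field_simps)
  have inj: "inj_on x {0..k}"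
  proof (rule inj_onI)
    fix i j assume "i \<in> {0..k}" "j \<in> {0..k}" "x i = x j"
    then show "i = j" unfolding x_def using False neg[of i] neg[of j] negeq[of i j]
      by (auto split: if_splits)
  qed
  have rng: "\<forall>i\<in>{0..k}. x i \<in> {-1<..<1}"
  proof
    fix i assume "i \<in> {0..k}"
    show "x i \<in> {-1<..<1}" unfolding x_def using y tpt(1)[of i] by auto
  qed
  have dd: "divided_diff k x f \<ge> 0"
    using f inj rng unfolding k_monotone_plus_def k_monotone_def by blast
  have z: "f (x i) = 0" if "i < k" for i
    using f neg[of i] that unfolding k_monotone_plus_def x_def by auto
  have "divided_diff k x f = (\<Sum>i\<in>insert k {0..<k}. f (x i) / (\<Prod>j\<in>{0..k} - {i}. (x i - x j)))"
    unfolding divided_diff_def by (rule sum.cong) auto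
  also have "\<dots> = f (x k) / (\<Prod>j\<in>{0..k} - {k}. (x k - x j)) + (\<Sum>i\<in>{0..<k}. f (x i) / (\<Prod>j\<in>{0..k} - {i}. (x i - x j)))"
    by (subst sum.insert) auto
  also have "(\<Sum>i\<in>{0..<k}. f (x i) / (\<Prod>j\<in>{0..k} - {i}. (x i - x j))) = 0"
    by (rule sum.neutral) (auto simp: z)
  also have "x k = y" by (simp add: x_def)
  finally have eq: "divided_diff k x f = f y / (\<Prod>j\<in>{0..k} - {k}. (y - x j))" by simp
  have "(\<Prod>j\<in>{0..k} - {k}. (y - x j)) > 0"
    using False by (intro prod_pos) (auto simp: x_def intro!: add_pos_pos)
  then show ?thesis using dd eq by (simp add: zero_le_divide_iff)
qed

lemma kmp_mono:
  assumes f: "f \<in> k_monotone_plus k" and k: "k \<ge> 1" and ab: "-1 < a" "a < b" "b < 1"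
  shows "f a \<le> f b"
proof (cases "a \<le> 0")
  case True
  then have "f a = 0" using f ab unfolding k_monotone_plus_def by auto
  then show ?thesis using kmp_nonneg[OF f, of b] ab by auto
next
  case False
  obtain m where km: "k = Suc m" using k by (cases k) auto
  define x where "x i = (if i = Suc m then b else if i = m then a else -1/(real i+2))" for i
  have neg: "-1 < -1/(real i+2) \<and> -1/(real i+2) < 0 \<and> 0 < 1/(real i+2) \<and> 1/(real i+2) < 1" for i :: nat
    by (auto simp: field_simps)
  have inj: "inj_on x {0..k}"
  proof (rule inj_onI)
    fix i j assume "i \<in> {0..k}" "j \<in> {0..k}" "x i = x j"
    note h = this
    have xm: "x m = a" and xsm: "x (Suc m) = b" by (simp_all add: x_def)
    have xo: "x l = -1/(real l+2)" if "l \<noteq> m" "l \<noteq> Suc m" for l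
      using that by (simp add: x_def)
    have xn: "x l < 0" if "l \<noteq> m" "l \<noteq> Suc m" for l
      using xo[OF that] tpt(2)[of l] by simp
    show "i = j"
    proof (cases "i \<in> {m, Suc m}")
      case True
      show ?thesis
      proof (cases "j \<in> {m, Suc m}")
        case True
        then show ?thesis using \<open>i \<in> {m, Suc m}\<close> h(3) xm xsm ab by auto
      next
        case F: False
        then have "x j < 0" using xn by auto
        then show ?thesis using True h(3) xm xsm ab False by auto
      qed
    next
      case F: False
      then have "x i < 0" using xn by auto
      show ?thesis
      proof (cases "j \<in> {m, Suc m}")
        case True
        then show ?thesis using \<open>x i < 0\<close> h(3) xm xsm ab False by auto
      next
        case False
        then show ?thesis using F h(3) xo negeq by auto
      qed
    qed
  qed
  have rng: "\<forall>i\<in>{0..k}. x i \<in> {-1<..<1}"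
  proof
    fix i assume "i \<in> {0..k}"
    show "x i \<in> {-1<..<1}" unfolding x_def using ab tpt(1)[of i] by auto
  qed
  have dd: "divided_diff k x f \<ge> 0"
    using f inj rng unfolding k_monotone_plus_def k_monotone_def by blast
  have z: "f (x i) = 0" if "i < m" for i
    using f neg[of i] that unfolding k_monotone_plus_def x_def by auto
  define Pa where "Pa = (\<Prod>j\<in>{0..<m}. (a + 1/(real j+2)))"
  define Pb where "Pb = (\<Prod>j\<in>{0..<m}. (b + 1/(real j+2)))"
  have Pa: "Pa > 0" unfolding Pa_def using False by (intro prod_pos) (auto intro: add_pos_pos)
  have Pab: "Pa \<le> Pb" unfolding Pa_def Pb_def using False ab
    by (intro prod_mono) (auto intro: add_pos_pos less_imp_le)
  have tm: "(\<Prod>j\<in>{0..Suc m} - {m}. (x m - x j)) = (a - b) * Pa"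
  proof -
    have "{0..Suc m} - {m} = insert (Suc m) {0..<m}" by auto
    then have "(\<Prod>j\<in>{0..Suc m} - {m}. (x m - x j)) = (x m - x (Suc m)) * (\<Prod>j\<in>{0..<m}. (x m - x j))"
      by (simp add: prod.insert)
    also have "(\<Prod>j\<in>{0..<m}. (x m - x j)) = Pa" unfolding Pa_def
      by (rule prod.cong) (auto simp: x_def)
    finally show ?thesis by (simp add: x_def)
  qed
  have tsm: "(\<Prod>j\<in>{0..Suc m} - {Suc m}. (x (Suc m) - x j)) = (b - a) * Pb"
  proof -
    have "{0..Suc m} - {Suc m} = insert m {0..<m}" by auto
    then have "(\<Prod>j\<in>{0..Suc m} - {Suc m}. (x (Suc m) - x j)) = (x (Suc m) - x m) * (\<Prod>j\<in>{0..<m}. (x (Suc m) - x j))"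
      by (simp add: prod.insert)
    also have "(\<Prod>j\<in>{0..<m}. (x (Suc m) - x j)) = Pb" unfolding Pb_def
      by (rule prod.cong) (auto simp: x_def)
    finally show ?thesis by (simp add: x_def)
  qed
  define D where "D i = f (x i) / (\<Prod>j\<in>{0..Suc m} - {i}. (x i - x j))" for i
  have "divided_diff k x f = (\<Sum>i\<in>insert (Suc m) (insert m {0..<m}). D i)"
    unfolding divided_diff_def km D_def by (rule sum.cong) auto
  also have "\<dots> = D (Suc m) + (D m + (\<Sum>i\<in>{0..<m}. D i))"
    by (simp add: sum.insert)
  also have "(\<Sum>i\<in>{0..<m}. D i) = 0"
    by (rule sum.neutral) (auto simp: D_def z)
  also have "D m = f a / ((a - b) * Pa)" unfolding D_def tm by (simp add: x_def)
  also have "D (Suc m) = f b / ((b - a) * Pb)" unfolding D_def tsm by (simp add: x_def)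
  finally have "0 \<le> f b / ((b - a) * Pb) + (f a / ((a - b) * Pa) + 0)" using dd by simp
  also have "\<dots> = f b / ((b - a) * Pb) + f a / ((a - b) * Pa)" by simp
  also have "\<dots> = (f b / Pb - f a / Pa) / (b - a)"
  proof -
    have "b - a \<noteq> 0" "Pa \<noteq> 0" "Pb \<noteq> 0" using ab Pa Pab by auto
    then show ?thesis by (simp add: divide_simps) (simp add: algebra_simps)
  qed
  finally have "f a / Pa \<le> f b / Pb" using ab by (simp add: zero_le_divide_iff)
  moreover have "f a / Pb \<le> f a / Pa"
    using kmp_nonneg[OF f, of a] ab Pa Pab by (intro divide_left_mono) auto
  ultimately have "f a / Pb \<le> f b / Pb" by linarith
  then show ?thesis using Pa Pab by (simp add: divide_le_cancel)
qed

lemma back_diff_bound: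
  assumes f: "f \<in> k_monotone_plus k" and k: "k \<ge> 1" and h: "h > 0"
    and x: "-1 < x - real k * h" "x < 1"
  shows "\<bar>back_diff k h f x\<bar> \<le> 2 ^ k * f x"
proof -
  have fx: "f x \<ge> 0" using kmp_nonneg[OF f] x h
    by (smt (verit, best) mult_nonneg_nonneg of_nat_0_le_iff)
  have e: "x - real k * h / 2 - real k * h / 2 = x - real k * h" by simp
  have pt: "-1 < x - real k * h + real i * h \<and> x - real k * h + real i * h \<le> x" if "i \<le> k" for i
  proof -
    have "real i * h \<le> real k * h" using that h by (intro mult_right_mono) auto
    moreover have "real i * h \<ge> 0" using h by simp
    ultimately show ?thesis using x h by linarith
  qed
  show ?thesis
  proof (cases "-1 \<le> x - real k * h \<and> x \<le> 1")
    case True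
    have "back_diff k h f x = (\<Sum>i=0..k. real (k choose i) * (-1) ^ (k - i) * f (x - real k * h + real i * h))"
      unfolding back_diff_def sym_diff_def e using True by simp
    also have "\<bar>\<dots>\<bar> \<le> (\<Sum>i=0..k. \<bar>real (k choose i) * (-1) ^ (k - i) * f (x - real k * h + real i * h)\<bar>)"
      by (rule sum_abs)
    also have "\<dots> \<le> (\<Sum>i=0..k. real (k choose i) * f x)"
    proof (rule sum_mono)
      fix i assume "i \<in> {0..k}"
      then have i: "i \<le> k" by auto
      have y1: "-1 < x - real k * h + real i * h" and y2: "x - real k * h + real i * h \<le> x"
        using pt[OF i] by auto
      have nn: "f (x - real k * h + real i * h) \<ge> 0" using kmp_nonneg[OF f y1] y2 x by auto
      have le: "f (x - real k * h + real i * h) \<le> f x"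
      proof (cases "x - real k * h + real i * h = x")
        case False
        then have "x - real k * h + real i * h < x" using y2 by linarith
        then show ?thesis by (rule kmp_mono[OF f k y1 _ x(2)])
      next
        case True
        show ?thesis by (subst True) (rule order_refl)
      qed
      have "\<bar>real (k choose i) * (-1) ^ (k - i) * f (x - real k * h + real i * h)\<bar> = real (k choose i) * f (x - real k * h + real i * h)"
        using nn by (simp add: abs_mult power_abs)
      also have "\<dots> \<le> real (k choose i) * f x" by (rule mult_left_mono[OF le]) simp
      finally show "\<bar>real (k choose i) * (-1) ^ (k - i) * f (x - real k * h + real i * h)\<bar> \<le> real (k choose i) * f x" .
    qed
    also have "\<dots> = (\<Sum>i=0..k. real (k choose i)) * f x"
      by (rule sum_distrib_right[symmetric])
    also have "(\<Sum>i=0..k. real (k choose i)) = real (\<Sum>i\<le>k. k choose i)"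
      by (simp only: atLeast0AtMost of_nat_sum)
    also have "\<dots> = 2 ^ k" by (simp only: choose_row_sum) simp
    finally show ?thesis .
  next
    case False
    then show ?thesis using x by linarith
  qed
qed

theorem lemma4p1:
  fixes k :: nat and q \<alpha> \<beta> :: real
  assumes "k \<ge> 1" and "1 \<le> q"
  shows "\<exists>c::real. c > 0 \<and>
           (\<forall>f \<delta>. f \<in> k_monotone_plus k \<inter> W_space q \<alpha> \<beta> \<longrightarrow> \<delta> > 0 \<longrightarrow>
              back_Omega k f \<delta> (jacobi_w \<alpha> \<beta>) q
                \<le> ennreal c * Lq_norm {1 - 2 * (real k)\<^sup>2 * \<delta>\<^sup>2..1} q
                                     (\<lambda>x. jacobi_w \<alpha> \<beta> x * f x))"
proof (intro exI[of _ "2 ^ k"] conjI allI impI)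
  fix f and \<delta> :: real
  assume fW: "f \<in> k_monotone_plus k \<inter> W_space q \<alpha> \<beta>" and "\<delta> > 0"
  then have f: "f \<in> k_monotone_plus k" by auto
  show "back_Omega k f \<delta> (jacobi_w \<alpha> \<beta>) q
        \<le> ennreal (2 ^ k) * Lq_norm {1 - 2 * (real k)\<^sup>2 * \<delta>\<^sup>2..1} q (\<lambda>x. jacobi_w \<alpha> \<beta> x * f x)"
    unfolding back_Omega_def
  proof (rule SUP_least)
    fix h assume "h \<in> {0<..2 * (real k)\<^sup>2 * \<delta>\<^sup>2}"
    then have h: "h > 0" by auto
    show "Lq_norm {1 - 2 * (real k)\<^sup>2 * \<delta>\<^sup>2..1} q (\<lambda>x. jacobi_w \<alpha> \<beta> x * back_diff k h f x)
        \<le> ennreal (2 ^ k) * Lq_norm {1 - 2 * (real k)\<^sup>2 * \<delta>\<^sup>2..1} q (\<lambda>x. jacobi_w \<alpha> \<beta> x * f x)"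
    proof (rule Lq_mono)
      show "AE x in lborel. x \<in> {1 - 2 * (real k)\<^sup>2 * \<delta>\<^sup>2..1} \<inter> {-1..1} \<longrightarrow>
          \<bar>jacobi_w \<alpha> \<beta> x * back_diff k h f x\<bar> \<le> 2 ^ k * \<bar>jacobi_w \<alpha> \<beta> x * f x\<bar>"
        using AE_lborel_singleton[of 1] AE_lborel_singleton[of "-1 + real k * h"]
      proof eventually_elim
        case (elim x)
        show ?case
        proof
          assume xs: "x \<in> {1 - 2 * (real k)\<^sup>2 * \<delta>\<^sup>2..1} \<inter> {-1..1}"
          show "\<bar>jacobi_w \<alpha> \<beta> x * back_diff k h f x\<bar> \<le> 2 ^ k * \<bar>jacobi_w \<alpha> \<beta> x * f x\<bar>"
          proof (cases "-1 < x - real k * h")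
            case True
            have x1: "x < 1" using xs elim by auto
            have b: "\<bar>back_diff k h f x\<bar> \<le> 2 ^ k * f x"
              by (rule back_diff_bound[OF f assms(1) h True x1])
            have fx: "f x \<ge> 0" using kmp_nonneg[OF f] True x1 h
              by (smt (verit, best) mult_nonneg_nonneg of_nat_0_le_iff)
            have "\<bar>jacobi_w \<alpha> \<beta> x * back_diff k h f x\<bar> = \<bar>jacobi_w \<alpha> \<beta> x\<bar> * \<bar>back_diff k h f x\<bar>"
              by (simp add: abs_mult)
            also have "\<dots> \<le> \<bar>jacobi_w \<alpha> \<beta> x\<bar> * (2 ^ k * f x)" using b by (simp add: mult_left_mono)
            also have "\<dots> = 2 ^ k * \<bar>jacobi_w \<alpha> \<beta> x * f x\<bar>" using fx by (simp add: abs_mult)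
            finally show ?thesis .
          next
            case False
            then have "x - real k * h < -1" using elim by auto
            then have cond: "\<not> (-1 \<le> x - real k * h / 2 - real k * h / 2)" by linarith
            have "back_diff k h f x = 0" unfolding back_diff_def sym_diff_def
              by (simp only: cond simp_thms if_False)
            then show ?thesis by simp
          qed
        qed
      qed
    qed (use assms in auto)
  qed
qed simp

end
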